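(* Let $G$ act by isometries on a $\delta$-hyperbolic geodesic space $X$, let $\alpha\ge3\delta$ and let $U\subset G$ be $\alpha$-reduced at $p\in X$. Let $w\equiv u_1\cdots u_m$ and $w'\equiv u'_1\cdots u'_{m'}$ be elements of $\mathbf F(U)$ written in reduced form ($m\ge1$). If $(p,w'p)_{wp}\le\frac12|u_mp-p|$, then $w$ is a prefix of $w'$.
   Context: Hyperbolicity: $(x,z)_t\ge\min\{(x,y)_t,(y,z)_t\}-\delta$, $(x,y)_z=\frac12(|x-z|+|y-z|-|x-y|)$. $U$ finite is $\alpha$-reduced at $p$ if $U\cap U^{-1}=\varnothing$ and for distinct $u_1,u_2\in U\sqcup U^{-1}$, $(u_1p,u_2p)_p<\frac12\min\{|u_1p-p|,|u_2p-p|\}-\alpha-50\delta$. $\mathbf F(U)$ is the free group on $U$; its elements act on $X$ via their images in $G$. *)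

theory Defs
  imports "HOL-Analysis.Analysis" "HOL-Algebra.Group" "HOL-Library.Sublist"
begin

definition gromov :: "'x::metric_space \<Rightarrow> 'x \<Rightarrow> 'x \<Rightarrow> real" where
  "gromov x y z = (dist x z + dist y z - dist x y) / 2"

definition geodesic_space :: "'x::metric_space itself \<Rightarrow> bool" where
  "geodesic_space _ \<longleftrightarrow> (\<forall>x y::'x. \<exists>\<gamma>::real \<Rightarrow> 'x. \<gamma> 0 = x \<and> \<gamma> (dist x y) = y \<and>
      (\<forall>s\<in>{0..dist x y}. \<forall>t\<in>{0..dist x y}. dist (\<gamma> s) (\<gamma> t) = \<bar>s - t\<bar>))"

definition hyperbolic :: "'x::metric_space itself \<Rightarrow> real \<Rightarrow> bool" where
  "hyperbolic _ \<delta> \<longleftrightarrow> (\<forall>x y z t::'x. gromov x z t \<ge> min (gromov x y t) (gromov y z t) - \<delta>)"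

definition isometric_action :: "('g, 'b) monoid_scheme \<Rightarrow> ('g \<Rightarrow> 'x::metric_space \<Rightarrow> 'x) \<Rightarrow> bool" where
  "isometric_action G act \<longleftrightarrow> group G \<and>
     (\<forall>x. act \<one>\<^bsub>G\<^esub> x = x) \<and>
     (\<forall>g\<in>carrier G. \<forall>h\<in>carrier G. \<forall>x. act (g \<otimes>\<^bsub>G\<^esub> h) x = act g (act h x)) \<and>
     (\<forall>g\<in>carrier G. \<forall>x y. dist (act g x) (act g y) = dist x y)"

text \<open>The letters U \<union> U^{-1} (U \<inter> U^{-1} = {} makes this a disjoint union embedded in G).\<close>
definition letters :: "('g, 'b) monoid_scheme \<Rightarrow> 'g set \<Rightarrow> 'g set" where
  "letters G U = U \<union> (\<lambda>u. inv\<^bsub>G\<^esub> u) ` U"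

definition alpha_reduced ::
  "('g, 'b) monoid_scheme \<Rightarrow> ('g \<Rightarrow> 'x::metric_space \<Rightarrow> 'x) \<Rightarrow> real \<Rightarrow> real \<Rightarrow> 'g set \<Rightarrow> 'x \<Rightarrow> bool" where
  "alpha_reduced G act \<delta> \<alpha> U p \<longleftrightarrow> U \<subseteq> carrier G \<and> finite U \<and>
     U \<inter> (\<lambda>u. inv\<^bsub>G\<^esub> u) ` U = {} \<and>
     (\<forall>u1\<in>letters G U. \<forall>u2\<in>letters G U. u1 \<noteq> u2 \<longrightarrow>
        gromov (act u1 p) (act u2 p) p
          < min (dist (act u1 p) p) (dist (act u2 p) p) / 2 - \<alpha> - 50 * \<delta>)"

text \<open>Reduced words of the free group F(U): lists of letters from U \<union> U^{-1}
  with no two consecutive mutually inverse letters.\<close>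
definition reduced_word :: "('g, 'b) monoid_scheme \<Rightarrow> 'g set \<Rightarrow> 'g list \<Rightarrow> bool" where
  "reduced_word G U w \<longleftrightarrow> set w \<subseteq> letters G U \<and>
     (\<forall>i. Suc i < length w \<longrightarrow> w ! Suc i \<noteq> inv\<^bsub>G\<^esub> (w ! i))"

definition word_eval :: "('g, 'b) monoid_scheme \<Rightarrow> 'g list \<Rightarrow> 'g" where
  "word_eval G w = foldr (\<lambda>a acc. a \<otimes>\<^bsub>G\<^esub> acc) w \<one>\<^bsub>G\<^esub>"

end

theory Submission
  imports Defs
begin

lemma gromov_swap: "gromov x y z + gromov x z y = dist y z"
  unfolding gromov_def by (simp add: dist_commute field_simps)

lemma gromov_sym: "gromov x y z = gromov y x z"
  unfolding gromov_def by (simp add: dist_commute)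

lemma gromov_nonneg: "gromov x y z \<ge> 0"
  unfolding gromov_def using dist_triangle[of x y z] by (simp add: dist_commute)

lemma hyp_delta_nonneg:
  assumes "hyperbolic TYPE('x::metric_space) \<delta>" shows "\<delta> \<ge> 0"
proof -
  have "gromov (undefined::'x) undefined undefined \<ge> min (gromov (undefined::'x) undefined undefined) (gromov (undefined::'x) undefined undefined) - \<delta>"
    using assms unfolding hyperbolic_def by blast
  then show ?thesis by simp
qed

lemma chain_metric:
  fixes y :: "nat \<Rightarrow> 'x::metric_space"
  assumes hyp: "hyperbolic TYPE('x) \<delta>" and a: "\<alpha> \<ge> 0" and d: "\<delta> \<ge> 0"
    and loc: "\<And>i. 0 < i \<Longrightarrow> i < n \<Longrightarrow> gromov (y (i-1)) (y (Suc i)) (y i)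
         < min (dist (y (i-1)) (y i)) (dist (y i) (y (Suc i))) / 2 - \<alpha> - 50 * \<delta>"
    and base: "\<delta> < dist (y 0) (y 1) / 2"
  shows "1 \<le> k \<Longrightarrow> k \<le> n \<Longrightarrow> gromov (y 0) (y k) (y (k-1)) + \<delta> < dist (y (k-1)) (y k) / 2"
proof (induction k)
  case 0 then show ?case by simp
next
  case (Suc k)
  show ?case
  proof (cases "k = 0")
    case True
    then show ?thesis using base by (simp add: gromov_def dist_commute)
  next
    case False
    have IH: "gromov (y 0) (y k) (y (k-1)) + \<delta> < dist (y (k-1)) (y k) / 2"
      using Suc False by simp
    have l: "gromov (y (k-1)) (y (Suc k)) (y k)
         < min (dist (y (k-1)) (y k)) (dist (y k) (y (Suc k))) / 2 - \<alpha> - 50 * \<delta>"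
      using loc[of k] Suc False by simp
    have h: "gromov (y (k-1)) (y (Suc k)) (y k) \<ge> min (gromov (y (k-1)) (y 0) (y k)) (gromov (y 0) (y (Suc k)) (y k)) - \<delta>"
      using hyp unfolding hyperbolic_def by blast
    have sw: "gromov (y (k-1)) (y 0) (y k) = dist (y (k-1)) (y k) - gromov (y 0) (y k) (y (k-1))"
      using gromov_swap[of "y 0" "y k" "y (k-1)"] gromov_sym[of "y (k-1)" "y 0" "y k"]
      by (simp add: dist_commute)
    have m1: "min (dist (y (k-1)) (y k)) (dist (y k) (y (Suc k))) \<le> dist (y (k-1)) (y k)" by simp
    have m2: "min (dist (y (k-1)) (y k)) (dist (y k) (y (Suc k))) \<le> dist (y k) (y (Suc k))" by simp
    have "gromov (y 0) (y (Suc k)) (y k) \<le> gromov (y (k-1)) (y (Suc k)) (y k) + \<delta>"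
    proof (cases "gromov (y (k-1)) (y 0) (y k) \<le> gromov (y 0) (y (Suc k)) (y k)")
      case True
      then have "gromov (y (k-1)) (y (Suc k)) (y k) \<ge> gromov (y (k-1)) (y 0) (y k) - \<delta>"
        using h by simp
      then have False using sw IH l m1 a d by linarith
      then show ?thesis ..
    next
      case False
      then show ?thesis using h by simp
    qed
    then show ?thesis using l m2 a d by simp
  qed
qed

lemma eval_carrier: "group G \<Longrightarrow> set xs \<subseteq> carrier G \<Longrightarrow> word_eval G xs \<in> carrier G"
  by (induction xs) (auto simp: word_eval_def group.is_monoid monoid.m_closed monoid.one_closed)

lemma eval_append: "group G \<Longrightarrow> set xs \<subseteq> carrier G \<Longrightarrow> set ys \<subseteq> carrier G \<Longrightarrow>
   word_eval G (xs @ ys) = word_eval G xs \<otimes>\<^bsub>G\<^esub> word_eval G ys"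
proof (induction xs)
  case Nil
  then show ?case using eval_carrier[of G ys] by (simp add: word_eval_def group.is_monoid monoid.l_one)
next
  case (Cons a xs)
  then have "word_eval G (a # xs @ ys) = a \<otimes>\<^bsub>G\<^esub> (word_eval G xs \<otimes>\<^bsub>G\<^esub> word_eval G ys)"
    by (simp add: word_eval_def)
  also have "\<dots> = (a \<otimes>\<^bsub>G\<^esub> word_eval G xs) \<otimes>\<^bsub>G\<^esub> word_eval G ys"
    using Cons eval_carrier[of G xs] eval_carrier[of G ys]
    by (simp add: group.is_monoid monoid.m_assoc)
  finally show ?case by (simp add: word_eval_def)
qed

lemma eval_single: "group G \<Longrightarrow> a \<in> carrier G \<Longrightarrow> word_eval G [a] = a"
  by (simp add: word_eval_def group.is_monoid monoid.r_one)

lemma letters_carrier: "alpha_reduced G act \<delta> \<alpha> U p \<Longrightarrow> group G \<Longrightarrow> letters G U \<subseteq> carrier G"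
  unfolding alpha_reduced_def letters_def by (auto intro: group.inv_closed)

lemma letters_inv: "alpha_reduced G act \<delta> \<alpha> U p \<Longrightarrow> group G \<Longrightarrow> u \<in> letters G U \<Longrightarrow> inv\<^bsub>G\<^esub> u \<in> letters G U"
  unfolding alpha_reduced_def letters_def by (auto simp: group.inv_inv subset_iff)

lemma letter_ne_inv: "alpha_reduced G act \<delta> \<alpha> U p \<Longrightarrow> group G \<Longrightarrow> u \<in> letters G U \<Longrightarrow> inv\<^bsub>G\<^esub> u \<noteq> u"
  unfolding alpha_reduced_def letters_def
  by (auto simp: group.inv_inv subset_iff) (metis IntI empty_iff image_eqI)+

lemma iso_dist: "isometric_action G act \<Longrightarrow> g \<in> carrier G \<Longrightarrow> dist (act g x) (act g y) = dist x y"
  unfolding isometric_action_def by blast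

lemma iso_mult: "isometric_action G act \<Longrightarrow> g \<in> carrier G \<Longrightarrow> h \<in> carrier G \<Longrightarrow> act (g \<otimes>\<^bsub>G\<^esub> h) x = act g (act h x)"
  unfolding isometric_action_def by blast

lemma iso_gromov: "isometric_action G act \<Longrightarrow> g \<in> carrier G \<Longrightarrow> gromov (act g x) (act g y) (act g z) = gromov x y z"
  unfolding gromov_def using iso_dist by metis

lemma iso_inv_dist:
  assumes "isometric_action G act" "g \<in> carrier G" "u \<in> carrier G"
  shows "dist (act (g \<otimes>\<^bsub>G\<^esub> inv\<^bsub>G\<^esub> u) p) (act g p) = dist (act u p) p"
proof -
  have grp: "group G" using assms(1) unfolding isometric_action_def by blast
  have gi: "g \<otimes>\<^bsub>G\<^esub> inv\<^bsub>G\<^esub> u \<in> carrier G" using grp assms by (simp add: group.inv_closed group.is_monoid monoid.m_closed)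
  have "g = (g \<otimes>\<^bsub>G\<^esub> inv\<^bsub>G\<^esub> u) \<otimes>\<^bsub>G\<^esub> u"
    using grp assms by (simp add: group.inv_closed group.is_monoid monoid.m_assoc group.l_inv monoid.r_one)
  then have "act g p = act (g \<otimes>\<^bsub>G\<^esub> inv\<^bsub>G\<^esub> u) (act u p)"
    using iso_mult[OF assms(1) gi assms(3)] by metis
  then show ?thesis using iso_dist[OF assms(1) gi, of p "act u p"] by (simp add: dist_commute)
qed

lemma letter_far:
  assumes "alpha_reduced G act \<delta> \<alpha> U p" "isometric_action G act" "u \<in> letters G U"
  shows "dist (act u p) p / 2 > \<alpha> + 50 * \<delta>"
proof -
  have grp: "group G" using assms(2) unfolding isometric_action_def by blast
  have uc: "u \<in> carrier G" using letters_carrier[OF assms(1) grp] assms(3) by blast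
  have "gromov (act u p) (act (inv\<^bsub>G\<^esub> u) p) p < min (dist (act u p) p) (dist (act (inv\<^bsub>G\<^esub> u) p) p) / 2 - \<alpha> - 50 * \<delta>"
    using assms letters_inv[OF assms(1) grp assms(3)] letter_ne_inv[OF assms(1) grp assms(3)]
    unfolding alpha_reduced_def by metis
  moreover have "dist (act (inv\<^bsub>G\<^esub> u) p) p = dist (act u p) p"
    using iso_inv_dist[OF assms(2) group.is_monoid[OF grp, THEN monoid.one_closed] uc, of p] grp uc assms(2)
    by (simp add: group.inv_closed group.is_monoid monoid.l_one isometric_action_def)
  ultimately show ?thesis using gromov_nonneg[of "act u p" "act (inv\<^bsub>G\<^esub> u) p" p] by simp
qed


lemma take_eval:
  assumes grp: "group G" and sc: "set ws \<subseteq> carrier G" and i: "i < length ws"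
  shows "word_eval G (take (Suc i) ws) = word_eval G (take i ws) \<otimes>\<^bsub>G\<^esub> ws ! i"
proof -
  have "take (Suc i) ws = take i ws @ [ws ! i]" using i by (simp add: take_Suc_conv_app_nth)
  moreover have "set (take i ws) \<subseteq> carrier G" using sc by (meson set_take_subset subset_trans)
  moreover have "ws ! i \<in> carrier G" using sc i by (simp add: subset_iff)
  ultimately show ?thesis using eval_append[of G "take i ws" "[ws!i]"] eval_single[of G "ws!i"] grp by simp
qed

lemma mult_inv_cancel:
  assumes grp: "group G" and "a \<in> carrier G" "b \<in> carrier G"
  shows "(a \<otimes>\<^bsub>G\<^esub> b) \<otimes>\<^bsub>G\<^esub> inv\<^bsub>G\<^esub> b = a"
  using assms by (simp add: group.inv_closed group.is_monoid monoid.m_assoc group.r_inv monoid.r_one)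

lemma chain_group:
  assumes IA: "isometric_action G act" and hyp: "hyperbolic TYPE('x) \<delta>" and a: "\<alpha> \<ge> 0"
    and red: "alpha_reduced G act \<delta> \<alpha> U (p::'x::metric_space)"
    and lt: "set ws \<subseteq> letters G U"
    and adj: "\<forall>i. Suc i < length ws \<longrightarrow> ws ! Suc i \<noteq> inv\<^bsub>G\<^esub> (ws ! i)"
    and ne: "ws \<noteq> []" and hc: "h \<in> carrier G"
  shows "gromov (act h p) (act (h \<otimes>\<^bsub>G\<^esub> word_eval G ws) p)
      (act ((h \<otimes>\<^bsub>G\<^esub> word_eval G ws) \<otimes>\<^bsub>G\<^esub> inv\<^bsub>G\<^esub> (last ws)) p) + \<delta>
     < dist (act (last ws) p) p / 2"
proof -
  have grp: "group G" using IA unfolding isometric_action_def by blast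
  have mon: "monoid G" using grp by (simp add: group.is_monoid)
  have d: "\<delta> \<ge> 0" using hyp_delta_nonneg[OF hyp] .
  have LC: "letters G U \<subseteq> carrier G" using letters_carrier[OF red grp] .
  have sc: "set ws \<subseteq> carrier G" using lt LC by blast
  define n where "n = length ws"
  define e where "e = (\<lambda>i. h \<otimes>\<^bsub>G\<^esub> word_eval G (take i ws))"
  define y where "y = (\<lambda>i. act (e i) p)"
  have ec: "e i \<in> carrier G" for i
    unfolding e_def using hc eval_carrier[OF grp, of "take i ws"] sc
    by (meson monoid.m_closed mon set_take_subset subset_trans)
  have nth_l: "i < n \<Longrightarrow> ws ! i \<in> letters G U" for i using lt unfolding n_def by (simp add: subset_iff)
  have nth_c: "i < n \<Longrightarrow> ws ! i \<in> carrier G" for i using nth_l LC by blast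
  have eS: "i < n \<Longrightarrow> e (Suc i) = e i \<otimes>\<^bsub>G\<^esub> ws ! i" for i
  proof -
    assume i: "i < n"
    have tc: "word_eval G (take i ws) \<in> carrier G"
      using eval_carrier[OF grp, of "take i ws"] sc by (meson set_take_subset subset_trans)
    show ?thesis unfolding e_def using take_eval[OF grp sc, of i] i hc tc nth_c[OF i]
      by (simp add: n_def monoid.m_assoc[OF mon])
  qed
  have eP: "i < n \<Longrightarrow> e i = e (Suc i) \<otimes>\<^bsub>G\<^esub> inv\<^bsub>G\<^esub> (ws ! i)" for i
    using eS[of i] mult_inv_cancel[OF grp ec[of i] nth_c[of i]] by simp
  have yS: "i < n \<Longrightarrow> y (Suc i) = act (e i) (act (ws ! i) p)" for i
    unfolding y_def using eS iso_mult[OF IA ec nth_c] by simp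
  have yP: "i < n \<Longrightarrow> y i = act (e (Suc i)) (act (inv\<^bsub>G\<^esub> (ws ! i)) p)" for i
    unfolding y_def using eP iso_mult[OF IA ec, of "inv\<^bsub>G\<^esub> (ws ! i)" "Suc i"] nth_c[of i]
    by (simp add: group.inv_closed[OF grp])
  have loc: "gromov (y (i-1)) (y (Suc i)) (y i)
         < min (dist (y (i-1)) (y i)) (dist (y i) (y (Suc i))) / 2 - \<alpha> - 50 * \<delta>"
    if i: "0 < i" "i < n" for i
  proof -
    define j where "j = i - 1"
    have ij: "i = Suc j" "j < n" using i unfolding j_def by auto
    define u where "u = ws ! j"
    define u' where "u' = ws ! i"
    have ul: "inv\<^bsub>G\<^esub> u \<in> letters G U" using letters_inv[OF red grp nth_l[OF ij(2)]] u_def by simp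
    have u'l: "u' \<in> letters G U" using nth_l[OF i(2)] u'_def by simp
    have ne: "inv\<^bsub>G\<^esub> u \<noteq> u'" using adj ij i unfolding u_def u'_def n_def by metis
    have y1: "y (i-1) = act (e i) (act (inv\<^bsub>G\<^esub> u) p)" using yP[OF ij(2)] ij unfolding u_def by simp
    have y2: "y (Suc i) = act (e i) (act u' p)" using yS[OF i(2)] unfolding u'_def by simp
    have y3: "y i = act (e i) p" unfolding y_def by simp
    have g: "gromov (y (i-1)) (y (Suc i)) (y i) = gromov (act (inv\<^bsub>G\<^esub> u) p) (act u' p) p"
      using y1 y2 y3 iso_gromov[OF IA ec] by simp
    have d1: "dist (y (i-1)) (y i) = dist (act (inv\<^bsub>G\<^esub> u) p) p"
      using y1 y3 iso_dist[OF IA ec] by simp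
    have d2: "dist (y i) (y (Suc i)) = dist (act u' p) p"
      using y2 y3 iso_dist[OF IA ec] by (simp add: dist_commute)
    have "gromov (act (inv\<^bsub>G\<^esub> u) p) (act u' p) p < min (dist (act (inv\<^bsub>G\<^esub> u) p) p) (dist (act u' p) p) / 2 - \<alpha> - 50 * \<delta>"
      using red ul u'l ne unfolding alpha_reduced_def by blast
    then show ?thesis using g d1 d2 by simp
  qed
  have n0: "0 < n" using ne unfolding n_def by simp
  have base: "\<delta> < dist (y 0) (y 1) / 2"
  proof -
    have "dist (y 0) (y 1) = dist (act (ws ! 0) p) p"
      using yS[OF n0] iso_dist[OF IA ec, of 0 p "act (ws!0) p"] unfolding y_def by (simp add: dist_commute)
    then show ?thesis using letter_far[OF red IA nth_l[OF n0]] a d by simp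
  qed
  have main: "gromov (y 0) (y n) (y (n-1)) + \<delta> < dist (y (n-1)) (y n) / 2"
    using chain_metric[of \<delta> \<alpha> n y n, OF hyp a d loc base] n0 by simp
  have e0: "e 0 = h" unfolding e_def using hc by (simp add: word_eval_def monoid.r_one[OF mon])
  have en: "e n = h \<otimes>\<^bsub>G\<^esub> word_eval G ws" unfolding e_def n_def by simp
  have lst: "last ws = ws ! (n - 1)" using ne unfolding n_def by (simp add: last_conv_nth)
  have en1: "e (n-1) = (h \<otimes>\<^bsub>G\<^esub> word_eval G ws) \<otimes>\<^bsub>G\<^esub> inv\<^bsub>G\<^esub> (last ws)"
    using eP[of "n-1"] n0 en lst by simp
  have dd: "dist (y (n-1)) (y n) = dist (act (last ws) p) p"
    unfolding y_def en1 en[symmetric]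
    using iso_inv_dist[OF IA ec[of n] nth_c[of "n-1"]] n0 lst by simp
  show ?thesis using main dd unfolding y_def e0 en en1 by simp
qed


lemma split_common:
  "\<not> prefix w w' \<Longrightarrow> \<exists>c v v'. w = c @ v \<and> w' = c @ v' \<and> v \<noteq> [] \<and> (v' = [] \<or> hd v \<noteq> hd v')"
proof (induction w arbitrary: w')
  case Nil then show ?case by simp
next
  case (Cons a w)
  show ?case
  proof (cases w')
    case Nil then show ?thesis by (intro exI[of _ "[]"] exI[of _ "a # w"] exI[of _ "[]"]) simp
  next
    case (Cons b w2)
    show ?thesis
    proof (cases "a = b")
      case True
      then have "\<not> prefix w w2" using Cons.prems Cons by simp
      then obtain c v v' where "w = c @ v \<and> w2 = c @ v' \<and> v \<noteq> [] \<and> (v' = [] \<or> hd v \<noteq> hd v')"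
        using Cons.IH by blast
      then show ?thesis using True Cons by (intro exI[of _ "a # c"] exI[of _ v] exI[of _ v']) auto
    next
      case False
      then show ?thesis using Cons by (intro exI[of _ "[]"] exI[of _ "a # w"] exI[of _ w']) auto
    qed
  qed
qed

lemma adj_succ:
  "(\<forall>i. Suc i < length w \<longrightarrow> w ! Suc i \<noteq> f (w ! i)) = successively (\<lambda>a b. b \<noteq> f a) w"
proof (induction "\<lambda>a b. b \<noteq> f a" w rule: successively.induct)
  case (3 x y xs)
  show ?case
  proof
    assume A: "\<forall>i. Suc i < length (x # y # xs) \<longrightarrow> (x # y # xs) ! Suc i \<noteq> f ((x # y # xs) ! i)"
    have "y \<noteq> f x" using A[rule_format, of 0] by simp
    moreover have "\<forall>i. Suc i < length (y # xs) \<longrightarrow> (y # xs) ! Suc i \<noteq> f ((y # xs) ! i)"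
      using A by (metis Suc_less_eq length_Cons nth_Cons_Suc)
    ultimately show "successively (\<lambda>a b. b \<noteq> f a) (x # y # xs)" using 3 by simp
  next
    assume B: "successively (\<lambda>a b. b \<noteq> f a) (x # y # xs)"
    show "\<forall>i. Suc i < length (x # y # xs) \<longrightarrow> (x # y # xs) ! Suc i \<noteq> f ((x # y # xs) ! i)"
    proof (intro allI impI)
      fix i assume i: "Suc i < length (x # y # xs)"
      show "(x # y # xs) ! Suc i \<noteq> f ((x # y # xs) ! i)"
      proof (cases i)
        case 0 then show ?thesis using B by simp
      next
        case (Suc j) then show ?thesis using B 3 i by simp
      qed
    qed
  qed
qed (auto simp: less_Suc_eq)

lemma eval_rev_inv:
  assumes grp: "group G" shows "set v \<subseteq> carrier G \<Longrightarrow> word_eval G (rev (map (\<lambda>u. inv\<^bsub>G\<^esub> u) v)) = inv\<^bsub>G\<^esub> (word_eval G v)"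
proof (induction v)
  case Nil then show ?case using grp by (simp add: word_eval_def group.is_monoid monoid.inv_one)
next
  case (Cons a v)
  have vc: "word_eval G v \<in> carrier G" using eval_carrier[OF grp] Cons by simp
  have "word_eval G (rev (map (\<lambda>u. inv\<^bsub>G\<^esub> u) (a # v))) = word_eval G (rev (map (\<lambda>u. inv\<^bsub>G\<^esub> u) v)) \<otimes>\<^bsub>G\<^esub> word_eval G [inv\<^bsub>G\<^esub> a]"
  proof -
    have "(\<lambda>u. inv\<^bsub>G\<^esub> u) ` set v \<subseteq> carrier G" "inv\<^bsub>G\<^esub> a \<in> carrier G"
      using Cons grp by (auto simp: group.inv_closed)
    then show ?thesis using eval_append[OF grp, of "rev (map (\<lambda>u. inv\<^bsub>G\<^esub> u) v)" "[inv\<^bsub>G\<^esub> a]"] by simp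
  qed
  also have "\<dots> = inv\<^bsub>G\<^esub> (word_eval G v) \<otimes>\<^bsub>G\<^esub> inv\<^bsub>G\<^esub> a"
    using Cons grp eval_single[OF grp, of "inv\<^bsub>G\<^esub> a"] by (simp add: group.inv_closed)
  also have "\<dots> = inv\<^bsub>G\<^esub> (a \<otimes>\<^bsub>G\<^esub> word_eval G v)"
    using group.inv_mult_group[OF grp, of a "word_eval G v"] Cons vc by simp
  finally show ?case by (simp add: word_eval_def)
qed

theorem mainTheorem11:
  fixes G :: "('g, 'b) monoid_scheme"
    and act :: "'g \<Rightarrow> 'x::metric_space \<Rightarrow> 'x"
    and \<delta> \<alpha> :: real and U :: "'g set" and p :: 'x
    and w w' :: "'g list"
  assumes "isometric_action G act"
    and "geodesic_space TYPE('x)"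
    and "hyperbolic TYPE('x) \<delta>"
    and "\<alpha> \<ge> 3 * \<delta>"
    and "alpha_reduced G act \<delta> \<alpha> U p"
    and "reduced_word G U w" and "reduced_word G U w'"
    and "w \<noteq> []"
    and "gromov p (act (word_eval G w') p) (act (word_eval G w) p) \<le> dist (act (last w) p) p / 2"
  shows "prefix w w'"
proof (rule ccontr)
  assume np: "\<not> prefix w w'"
  note IA = assms(1) and hyp = assms(3) and red = assms(5)
  have grp: "group G" using IA unfolding isometric_action_def by blast
  have mon: "monoid G" using grp by (simp add: group.is_monoid)
  have d: "\<delta> \<ge> 0" using hyp_delta_nonneg[OF hyp] .
  have a: "\<alpha> \<ge> 0" using d assms(4) by simp
  have LC: "letters G U \<subseteq> carrier G" using letters_carrier[OF red grp] .
  have wl: "set w \<subseteq> letters G U" and wa: "successively (\<lambda>a b. b \<noteq> inv\<^bsub>G\<^esub> a) w"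
    using assms(6) adj_succ[of w "\<lambda>a. inv\<^bsub>G\<^esub> a"] unfolding reduced_word_def by auto
  have w'l: "set w' \<subseteq> letters G U" and w'a: "successively (\<lambda>a b. b \<noteq> inv\<^bsub>G\<^esub> a) w'"
    using assms(7) adj_succ[of w' "\<lambda>a. inv\<^bsub>G\<^esub> a"] unfolding reduced_word_def by auto
  obtain c v v' where cv: "w = c @ v" "w' = c @ v'" "v \<noteq> []" "v' = [] \<or> hd v \<noteq> hd v'"
    using split_common[OF np] by blast
  have cc: "set c \<subseteq> carrier G" "set v \<subseteq> carrier G" "set v' \<subseteq> carrier G"
    using wl w'l LC cv by auto
  define ws where "ws = rev (map (\<lambda>u. inv\<^bsub>G\<^esub> u) v') @ v"
  have wsl: "set ws \<subseteq> letters G U"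
    unfolding ws_def using wl w'l cv letters_inv[OF red grp] by auto
  have va: "successively (\<lambda>a b. b \<noteq> inv\<^bsub>G\<^esub> a) v" using wa cv successively_append_iff by blast
  have v'a: "successively (\<lambda>a b. b \<noteq> inv\<^bsub>G\<^esub> a) v'" using w'a cv successively_append_iff by blast
  have v'a2: "successively (\<lambda>x y. inv\<^bsub>G\<^esub> x \<noteq> inv\<^bsub>G\<^esub> (inv\<^bsub>G\<^esub> y)) v'"
    by (rule successively_mono[OF v'a]) (use cc grp in \<open>auto simp: group.inv_inv subset_iff\<close>)
  have jn: "v' \<noteq> [] \<Longrightarrow> hd v \<noteq> inv\<^bsub>G\<^esub> (inv\<^bsub>G\<^esub> (hd v'))"
    using cv cc grp by (auto simp: group.inv_inv subset_iff)
  have wsa: "successively (\<lambda>a b. b \<noteq> inv\<^bsub>G\<^esub> a) ws"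
    unfolding ws_def successively_append_iff using va v'a2 jn cv(3)
    by (auto simp: successively_map last_rev hd_map)
  have wsa': "\<forall>i. Suc i < length ws \<longrightarrow> ws ! Suc i \<noteq> inv\<^bsub>G\<^esub> (ws ! i)"
    using adj_succ[of ws "\<lambda>a. inv\<^bsub>G\<^esub> a"] wsa by simp
  have wne: "ws \<noteq> []" unfolding ws_def using cv by simp
  have lws: "last ws = last w" unfolding ws_def using cv by simp
  have ec: "word_eval G c \<in> carrier G" "word_eval G v \<in> carrier G" "word_eval G v' \<in> carrier G"
    using eval_carrier[OF grp] cc by auto
  have Ew: "word_eval G w = word_eval G c \<otimes>\<^bsub>G\<^esub> word_eval G v" using eval_append[OF grp] cc cv by simp
  have Ew': "word_eval G w' = word_eval G c \<otimes>\<^bsub>G\<^esub> word_eval G v'" using eval_append[OF grp] cc cv by simp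
  have ic: "(\<lambda>u. inv\<^bsub>G\<^esub> u) ` set v' \<subseteq> carrier G" using cc grp by (auto simp: group.inv_closed)
  have Ews: "word_eval G ws = inv\<^bsub>G\<^esub> (word_eval G v') \<otimes>\<^bsub>G\<^esub> word_eval G v"
    unfolding ws_def using eval_append[OF grp, of "rev (map (\<lambda>u. inv\<^bsub>G\<^esub> u) v')" v] eval_rev_inv[OF grp cc(3)] cc ic
    by simp
  have hw: "word_eval G w' \<otimes>\<^bsub>G\<^esub> word_eval G ws = word_eval G w"
    unfolding Ew Ew' Ews using ec grp
    by (simp add: monoid.m_assoc[OF mon] group.inv_closed group.r_inv[OF grp] monoid.m_closed[OF mon]
         monoid.l_one[OF mon] flip: monoid.m_assoc[OF mon, of "word_eval G v'"])
  have w'c: "word_eval G w' \<in> carrier G" using Ew' ec monoid.m_closed[OF mon] by simp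
  note c2 = chain_group[OF IA hyp a red wsl wsa' wne w'c]
  note c1 = chain_group[OF IA hyp a red wl adj_succ[of w "\<lambda>a. inv\<^bsub>G\<^esub> a", THEN iffD2, OF wa] assms(8) monoid.one_closed[OF mon]]
  have wc: "word_eval G w \<in> carrier G" using eval_carrier[OF grp] wl LC by auto
  have lc: "last w \<in> carrier G" using wl LC last_in_set[OF assms(8)] by auto
  define E where "E = word_eval G w"
  define P where "P = act E p"
  define Q where "Q = act (E \<otimes>\<^bsub>G\<^esub> inv\<^bsub>G\<^esub> (last w)) p"
  define W where "W = act (word_eval G w') p"
  define D where "D = dist (act (last w) p) p"
  have one: "act \<one>\<^bsub>G\<^esub> p = p" using IA unfolding isometric_action_def by blast
  have C1: "gromov p P Q + \<delta> < D / 2"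
    using c1 one wc unfolding P_def Q_def D_def E_def by (simp add: monoid.l_one[OF mon])
  have C2: "gromov W P Q + \<delta> < D / 2"
    using c2 unfolding P_def Q_def D_def E_def W_def hw lws .
  have DQ: "dist Q P = D" unfolding Q_def P_def D_def E_def using iso_inv_dist[OF IA wc lc] .
  have H: "gromov p W P \<ge> min (gromov p Q P) (gromov Q W P) - \<delta>"
    using hyp unfolding hyperbolic_def by blast
  have s1: "gromov p Q P + gromov p P Q = dist Q P" using gromov_swap .
  have s2: "gromov W Q P + gromov W P Q = dist Q P" using gromov_swap .
  have s3: "gromov Q W P = gromov W Q P" using gromov_sym .
  have "gromov p W P > D / 2"
  proof (cases "gromov p Q P \<le> gromov Q W P")
    case True then show ?thesis using H s1 C1 DQ by simp
  next
    case False then show ?thesis using H s2 s3 C2 DQ by simp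
  qed
  moreover have "gromov p W P \<le> D / 2" using assms(9) unfolding W_def P_def E_def D_def .
  ultimately show False by simp
qed

end
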